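(* A cluster transformation $\mathbf K:\mathbf q\to\mathbf q$ is a cluster Donaldson–Thomas transformation of $\mathbf q$ if and only if $F(\mathbf K):-\mathbf q\to-\mathbf q$ is a cluster Donaldson–Thomas transformation of $-\mathbf q$.
   Context: For a quiver $\mathbf q$ with exchange matrix $\varepsilon$, $-\mathbf q$ is the quiver with matrix $-\varepsilon$ (all arrows reversed). A cluster transformation $\sigma:\mathbf q\to\mathbf q'$ is a finite sequence of mutations $\mu_k$ and relabelings; $I(\sigma):-\mathbf q\to-\mathbf q'$ is the same sequence applied to $-\mathbf q$, and $F(\sigma):=I(\sigma^{-1}):-\mathbf q'\to-\mathbf q$, where $\sigma^{-1}$ is the reverse sequence. Tropical coordinates of a quiver with vertex set $I$ are $\mathbb Z^I$; mutation acts by $x'_k=-x_k$, $x'_i=x_i-\varepsilon_{ik}\min\{0,-\mathrm{sgn}(\varepsilon_{ik})x_k\}$, relabeling by permuting coordinates. The $C$-matrix $C_\sigma$ has $j$-th column the image of the $j$-th unit vector (basic positive lamination $l^+_{\mathbf q,j}$) under the tropicalized map of $\sigma$. A cluster Donaldson–Thomas transformation of $\mathbf q$ is a cluster transformation $\mathbf K:\mathbf q\to\mathbf q$ with $C_{\mathbf K}=-\mathrm{Id}$. *)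

theory Defs
  imports Main
begin

text \<open>A quiver on the finite vertex type 'i is given by its exchange matrix
  eps :: 'i => 'i => int, required to be skew-symmetric.\<close>

type_synonym 'i exmat = "'i \<Rightarrow> 'i \<Rightarrow> int"

definition skew_symmetric :: "'i exmat \<Rightarrow> bool" where
  "skew_symmetric eps \<longleftrightarrow> (\<forall>i j. eps i j = - eps j i)"

definition neg_quiver :: "'i exmat \<Rightarrow> 'i exmat" where
  "neg_quiver eps = (\<lambda>i j. - eps i j)"

text \<open>Elementary steps of a cluster transformation: a mutation at a vertex,
  or a relabeling by a permutation pi (vertex i is renamed pi i).\<close>
datatype 'i step = Mut 'i | Rel "'i \<Rightarrow> 'i"

definition wf_steps :: "'i step list \<Rightarrow> bool" where
  "wf_steps s \<longleftrightarrow> (\<forall>pi. Rel pi \<in> set s \<longrightarrow> bij pi)"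

definition mut_mat :: "'i \<Rightarrow> 'i exmat \<Rightarrow> 'i exmat" where
  "mut_mat k eps = (\<lambda>i j. if i = k \<or> j = k then - eps i j
      else eps i j + (\<bar>eps i k\<bar> * eps k j + eps i k * \<bar>eps k j\<bar>) div 2)"

definition rel_mat :: "('i \<Rightarrow> 'i) \<Rightarrow> 'i exmat \<Rightarrow> 'i exmat" where
  "rel_mat pi eps = (\<lambda>a b. eps (inv pi a) (inv pi b))"

definition step_mat :: "'i step \<Rightarrow> 'i exmat \<Rightarrow> 'i exmat" where
  "step_mat st eps = (case st of Mut k \<Rightarrow> mut_mat k eps | Rel pi \<Rightarrow> rel_mat pi eps)"

fun target :: "'i exmat \<Rightarrow> 'i step list \<Rightarrow> 'i exmat" where
  "target eps [] = eps"
| "target eps (st # s) = target (step_mat st eps) s"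

definition cluster_transf :: "'i exmat \<Rightarrow> 'i step list \<Rightarrow> 'i exmat \<Rightarrow> bool" where
  "cluster_transf eps s eps' \<longleftrightarrow> wf_steps s \<and> target eps s = eps'"

definition trop_mut :: "'i exmat \<Rightarrow> 'i \<Rightarrow> ('i \<Rightarrow> int) \<Rightarrow> ('i \<Rightarrow> int)" where
  "trop_mut eps k x = (\<lambda>i. if i = k then - x k
      else x i - eps i k * min 0 (- sgn (eps i k) * x k))"

definition trop_relabel :: "('i \<Rightarrow> 'i) \<Rightarrow> ('i \<Rightarrow> int) \<Rightarrow> ('i \<Rightarrow> int)" where
  "trop_relabel pi x = (\<lambda>a. x (inv pi a))"

fun trop_map :: "'i exmat \<Rightarrow> 'i step list \<Rightarrow> ('i \<Rightarrow> int) \<Rightarrow> ('i \<Rightarrow> int)" where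
  "trop_map eps [] x = x"
| "trop_map eps (Mut k # s) x = trop_map (mut_mat k eps) s (trop_mut eps k x)"
| "trop_map eps (Rel pi # s) x = trop_map (rel_mat pi eps) s (trop_relabel pi x)"

definition unit_vec :: "'i \<Rightarrow> ('i \<Rightarrow> int)" where
  "unit_vec j = (\<lambda>i. if i = j then 1 else 0)"

definition C_matrix :: "'i exmat \<Rightarrow> 'i step list \<Rightarrow> 'i \<Rightarrow> 'i \<Rightarrow> int" where
  "C_matrix eps s = (\<lambda>i j. trop_map eps s (unit_vec j) i)"

definition inv_step :: "'i step \<Rightarrow> 'i step" where
  "inv_step st = (case st of Mut k \<Rightarrow> Mut k | Rel pi \<Rightarrow> Rel (inv pi))"

definition inv_steps :: "'i step list \<Rightarrow> 'i step list" where
  "inv_steps s = rev (map inv_step s)"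

text \<open>F(sigma) := I(sigma^{-1}); as a step sequence it is sigma^{-1}, to be
  applied to the negated quiver.\<close>
definition F_transf :: "'i step list \<Rightarrow> 'i step list" where
  "F_transf s = inv_steps s"

definition cluster_DT :: "'i exmat \<Rightarrow> 'i step list \<Rightarrow> bool" where
  "cluster_DT eps K \<longleftrightarrow> cluster_transf eps K eps \<and>
     C_matrix eps K = (\<lambda>i j. if i = j then -1 else 0)"

end

theory Submission
  imports Defs
begin

lemma even_term: "(\<bar>a\<bar>*b + a*\<bar>b\<bar>) mod 2 = (0::int)"
proof -
  have "\<bar>a\<bar>*b + a*\<bar>b\<bar> = 2*(a*b) \<or> \<bar>a\<bar>*b + a*\<bar>b\<bar> = 2*(-(a*b)) \<or> \<bar>a\<bar>*b + a*\<bar>b\<bar> = 0"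
  proof (cases "a \<ge> 0"; cases "b \<ge> 0")
  qed (simp_all add: abs_of_nonneg abs_of_neg)
  then show ?thesis by auto
qed

lemma neg_div2: "n mod 2 = (0::int) \<Longrightarrow> (- n) div 2 = - (n div 2)"
proof -
  assume "n mod 2 = 0"
  then obtain m where "n = 2 * m" by (metis mult_div_mod_eq add_0_right)
  then show ?thesis by simp
qed

lemma mut_mat_inv: "mut_mat k (mut_mat k eps) = eps"
proof -
  have "\<And>i j. mut_mat k (mut_mat k eps) i j = eps i j"
  proof -
    fix i j
    let ?n = "\<bar>eps i k\<bar> * eps k j + eps i k * \<bar>eps k j\<bar>"
    have e: "(\<bar>- eps i k\<bar> * - eps k j + - eps i k * \<bar>- eps k j\<bar>) div 2 = - (?n div 2)"
      using neg_div2[OF even_term[of "eps i k" "eps k j"]] by simp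
    show "mut_mat k (mut_mat k eps) i j = eps i j"
      unfolding mut_mat_def using e by auto
  qed
  then show ?thesis by blast
qed

lemma mut_mat_neg: "mut_mat k (neg_quiver eps) = neg_quiver (mut_mat k eps)"
proof -
  have "\<And>i j. mut_mat k (neg_quiver eps) i j = neg_quiver (mut_mat k eps) i j"
  proof -
    fix i j
    let ?n = "\<bar>eps i k\<bar> * eps k j + eps i k * \<bar>eps k j\<bar>"
    have e: "(\<bar>- eps i k\<bar> * - eps k j + - eps i k * \<bar>- eps k j\<bar>) div 2 = - (?n div 2)"
      using neg_div2[OF even_term[of "eps i k" "eps k j"]] by simp
    show "mut_mat k (neg_quiver eps) i j = neg_quiver (mut_mat k eps) i j"
      unfolding mut_mat_def neg_quiver_def using e by auto
  qed
  then show ?thesis by blast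
qed

lemma step_mat_neg: "step_mat st (neg_quiver eps) = neg_quiver (step_mat st eps)"
proof (cases st)
  case (Mut k) then show ?thesis by (simp add: step_mat_def mut_mat_neg)
next
  case (Rel pi) then show ?thesis by (auto simp: step_mat_def rel_mat_def neg_quiver_def)
qed

lemma target_neg: "target (neg_quiver eps) s = neg_quiver (target eps s)"
  by (induction s arbitrary: eps) (auto simp: step_mat_neg)

lemma target_append: "target eps (a @ b) = target (target eps a) b"
  by (induction a arbitrary: eps) auto

lemma trop_map_append: "trop_map eps (a @ b) x = trop_map (target eps a) b (trop_map eps a x)"
proof (induction a arbitrary: eps x)
  case Nil then show ?case by simp
next
  case (Cons st a) then show ?case by (cases st) (auto simp: step_mat_def)
qed

lemma wf_cons: "wf_steps (st # s) \<Longrightarrow> wf_steps s"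
  by (auto simp: wf_steps_def)

lemma step_inv_mat: "wf_steps [st] \<Longrightarrow> step_mat (inv_step st) (step_mat st eps) = eps"
proof (cases st)
  case (Mut k) then show ?thesis by (simp add: step_mat_def inv_step_def mut_mat_inv)
next
  case (Rel pi)
  assume "wf_steps [st]"
  then have b: "bij pi" using Rel by (auto simp: wf_steps_def)
  have ii: "inv (inv pi) = pi" by (rule inv_inv_eq[OF b])
  have "rel_mat (inv pi) (rel_mat pi eps) = eps"
    unfolding rel_mat_def ii using bij_is_inj[OF b] by (simp add: inv_f_f)
  then show ?thesis using Rel by (simp add: step_mat_def inv_step_def)
qed

lemma inv_steps_cons: "inv_steps (st # s) = inv_steps s @ [inv_step st]"
  by (simp add: inv_steps_def)

lemma target_inv: "wf_steps s \<Longrightarrow> target (target eps s) (inv_steps s) = eps"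
proof (induction s arbitrary: eps)
  case Nil then show ?case by (simp add: inv_steps_def)
next
  case (Cons st s)
  have w: "wf_steps [st]" using Cons.prems by (auto simp: wf_steps_def)
  show ?case using Cons.IH[OF wf_cons[OF Cons.prems]] step_inv_mat[OF w]
    by (simp add: inv_steps_cons target_append)
qed

lemma trop_mut_inv: "trop_mut (mut_mat k eps) k (trop_mut eps k x) = x"
proof -
  have "\<And>i. trop_mut (mut_mat k eps) k (trop_mut eps k x) i = x i"
    by (auto simp: trop_mut_def mut_mat_def sgn_if)
  then show ?thesis by blast
qed

lemma trop_map_inv: "wf_steps s \<Longrightarrow> trop_map (target eps s) (inv_steps s) (trop_map eps s x) = x"
proof (induction s arbitrary: eps x)
  case Nil then show ?case by (simp add: inv_steps_def)
next
  case (Cons st s)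
  have ws: "wf_steps s" using wf_cons[OF Cons.prems] .
  define eps' where "eps' = step_mat st eps"
  define x' where "x' = trop_map eps [st] x"
  have A: "trop_map eps (st # s) x = trop_map eps' s x'"
    unfolding eps'_def x'_def using trop_map_append[of eps "[st]" s x] by simp
  have B: "target eps (st # s) = target eps' s" by (simp add: eps'_def)
  have C: "trop_map (target eps' s) (inv_steps s @ [inv_step st]) (trop_map eps' s x')
      = trop_map eps' [inv_step st] x'"
    using trop_map_append[of "target eps' s" "inv_steps s" "[inv_step st]"] Cons.IH[OF ws]
      target_inv[OF ws] by simp
  have D: "trop_map eps' [inv_step st] x' = x"
  proof (cases st)
    case (Mut k)
    then show ?thesis by (simp add: eps'_def x'_def step_mat_def inv_step_def trop_mut_inv)
  next
    case (Rel pi)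
    then have b: "bij pi" using Cons.prems by (auto simp: wf_steps_def)
    have ii: "inv (inv pi) = pi" by (rule inv_inv_eq[OF b])
    have "trop_relabel (inv pi) (trop_relabel pi x) = x"
      unfolding trop_relabel_def ii using bij_is_inj[OF b] by (simp add: inv_f_f)
    then show ?thesis using Rel by (simp add: eps'_def x'_def step_mat_def inv_step_def)
  qed
  show ?case using A B C D by (simp add: inv_steps_cons)
qed

lemma trop_map_neg: "trop_map (neg_quiver eps) s x = (\<lambda>a. - trop_map eps s (\<lambda>b. - x b) a)"
proof (induction s arbitrary: eps x)
  case Nil then show ?case by simp
next
  case (Cons st s)
  show ?case
  proof (cases st)
    case (Mut k)
    have "trop_mut (neg_quiver eps) k x = (\<lambda>a. - trop_mut eps k (\<lambda>b. - x b) a)"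
      by (auto simp: trop_mut_def neg_quiver_def sgn_if min_def)
    then show ?thesis using Cons.IH Mut by (simp add: mut_mat_neg)
  next
    case (Rel pi)
    have "rel_mat pi (neg_quiver eps) = neg_quiver (rel_mat pi eps)"
      by (auto simp: rel_mat_def neg_quiver_def)
    moreover have "trop_relabel pi x = (\<lambda>a. - trop_relabel pi (\<lambda>b. - x b) a)"
      by (auto simp: trop_relabel_def)
    ultimately show ?thesis using Cons.IH Rel by simp
  qed
qed

lemma wf_inv: "wf_steps s \<Longrightarrow> wf_steps (inv_steps s)"
  by (auto simp: wf_steps_def inv_steps_def inv_step_def bij_imp_bij_inv split: step.splits)

lemma inv_inv_steps: "wf_steps s \<Longrightarrow> inv_steps (inv_steps s) = s"
proof -
  assume w: "wf_steps s"
  have "\<forall>st\<in>set s. inv_step (inv_step st) = st"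
    using w by (auto simp: wf_steps_def inv_step_def inv_inv_eq split: step.splits)
  then have "map (inv_step \<circ> inv_step) s = s" by (induction s) auto
  then show ?thesis by (simp add: inv_steps_def rev_map)
qed

theorem mainTheorem10:
  fixes eps :: "('i::finite) exmat" and K :: "'i step list"
  assumes "skew_symmetric eps"
    and "cluster_transf eps K eps"
  shows "cluster_DT eps K \<longleftrightarrow> cluster_DT (neg_quiver eps) (F_transf K)"
proof -
  have w: "wf_steps K" and t: "target eps K = eps" using assms(2) by (auto simp: cluster_transf_def)
  define T where "T = trop_map eps K"
  define G where "G = trop_map eps (inv_steps K)"
  have GT: "G (T x) = x" for x using trop_map_inv[OF w, of eps x] t by (simp add: T_def G_def)
  have ti: "target eps (inv_steps K) = eps" using target_inv[OF w, of eps] t by simp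
  have TG: "T (G y) = y" for y
    using trop_map_inv[OF wf_inv[OF w], of eps y] ti inv_inv_steps[OF w] by (simp add: T_def G_def)
  have ct: "cluster_transf (neg_quiver eps) (F_transf K) (neg_quiver eps)"
    using wf_inv[OF w] ti by (simp add: cluster_transf_def F_transf_def target_neg)
  have M: "(\<lambda>i j. if i = j then -1 else 0) = (\<lambda>i j. - unit_vec j i)"
    by (simp add: unit_vec_def fun_eq_iff)
  have gen: "(\<lambda>i j. f j i) = (\<lambda>i j. - u j i) \<longleftrightarrow> (\<forall>j. f j = (\<lambda>b. - u j b))"
    for f u :: "'i \<Rightarrow> 'i \<Rightarrow> int"
    by (auto simp: fun_eq_iff)
  have C1: "C_matrix eps K = (\<lambda>i j. if i = j then -1 else 0) \<longleftrightarrow> (\<forall>j. T (unit_vec j) = (\<lambda>b. - unit_vec j b))"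
    unfolding M C_matrix_def T_def by (rule gen)
  have neg2: "(\<lambda>b. - (\<lambda>b. - unit_vec j b) b) = unit_vec j" for j by simp
  have C2: "C_matrix (neg_quiver eps) (F_transf K) = (\<lambda>i j. if i = j then -1 else 0)
      \<longleftrightarrow> (\<forall>j. G (\<lambda>b. - unit_vec j b) = unit_vec j)"
  proof -
    have "C_matrix (neg_quiver eps) (F_transf K) = (\<lambda>i j. - G (\<lambda>b. - unit_vec j b) i)"
      unfolding C_matrix_def F_transf_def G_def trop_map_neg by simp
    then have "C_matrix (neg_quiver eps) (F_transf K) = (\<lambda>i j. if i = j then -1 else 0)
      \<longleftrightarrow> (\<forall>j. (\<lambda>b. - G (\<lambda>b. - unit_vec j b) b) = (\<lambda>b. - unit_vec j b))"
      unfolding M using gen[of "\<lambda>j i. - G (\<lambda>b. - unit_vec j b) i" unit_vec] by simp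
    also have "\<dots> \<longleftrightarrow> (\<forall>j. G (\<lambda>b. - unit_vec j b) = unit_vec j)"
      by (simp add: fun_eq_iff)
    finally show ?thesis .
  qed
  have E: "(\<forall>j. T (unit_vec j) = (\<lambda>b. - unit_vec j b)) \<longleftrightarrow> (\<forall>j. G (\<lambda>b. - unit_vec j b) = unit_vec j)"
  proof
    assume h: "\<forall>j. T (unit_vec j) = (\<lambda>b. - unit_vec j b)"
    show "\<forall>j. G (\<lambda>b. - unit_vec j b) = unit_vec j"
    proof
      fix j show "G (\<lambda>b. - unit_vec j b) = unit_vec j" using GT[of "unit_vec j"] h by simp
    qed
  next
    assume h: "\<forall>j. G (\<lambda>b. - unit_vec j b) = unit_vec j"
    show "\<forall>j. T (unit_vec j) = (\<lambda>b. - unit_vec j b)"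
    proof
      fix j show "T (unit_vec j) = (\<lambda>b. - unit_vec j b)"
        using TG[of "\<lambda>b. - unit_vec j b"] h by simp
    qed
  qed
  show ?thesis using C1 C2 E ct assms(2) by (simp add: cluster_DT_def)
qed

end
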